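(* Let $\mathcal G=(\mathcal N,E)$ be an undirected graph on $N$ nodes with adjacency-type matrix $A$ and maximal degree $d_{\max}$ (defined in the context), and let $x^\star$ be any solution of $$\min_{x\in\mathbb R^N}\mathbf 1^\top x\quad\text{s.t.}\quad Ax\ge\mathbf 1,\ x\ge 0.$$ Run Algorithm 1 (described in the context) with $\delta=\epsilon$ and $\alpha=\frac{\delta}{2(d_{\max}+1)^2}$, where $\epsilon>0$. Then the $(1+\epsilon)$-approximation ratio $\frac{\mathbf 1^\top x^{(K_\epsilon)}-\mathbf 1^\top x^\star}{\mathbf 1^\top x^\star}\le\epsilon$ is achieved after $K_\epsilon=O\big(d_{\max}^{3/2}/\epsilon\big)$ iterations; precisely, there is an absolute constant $C>0$ such that for all $\epsilon\in(0,1]$ and all such graphs the ratio holds for every $k\ge C\,(d_{\max}+1)^{3/2}/\epsilon$.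
   Context: $A$ is the $N\times N$ symmetric matrix with $A_{ii}=1$ for all $i$ and, for $i\ne j$, $A_{ij}=1$ if $\{i,j\}\in E$, $A_{ij}=0$ otherwise. $\Omega_i$ is the closed one-hop neighborhood of node $i$ (its neighbors together with $i$). $d_{\max}$ is the maximal degree of $\mathcal G$, where the degree of $i$ is its number of neighbors excluding $i$, i.e. $|\Omega_i|-1$. $\mathbf 1$ is the all-ones vector, $[c]_+=\max\{0,c\}$, and $\mathcal P_{[0,1]}(c)=\min\{1,\max\{0,c\}\}$. Algorithm 1: initialize $\lambda_i^{(0)}=0$ and $z_i^{(-1)}=0$ for all $i$ (the value of $\overline x_j^{(-1)}$ is irrelevant since it is multiplied by $0$). For $k=0,1,2,\dots$, each node $i$ computes $$\widehat x_i^{(k)}=\mathcal P_{[0,1]}\Big(\tfrac1\delta\big(\textstyle\sum_{j\in\Omega_i}\lambda_j^{(k)}-1\big)\Big),$$ and then $$z_i^{(k)}=z_i^{(k-1)}+\tfrac{k+1}{2}\Big(1-\textstyle\sum_{j\in\Omega_i}\widehat x_j^{(k)}\Big),\qquad \mu_i^{(k)}=\Big[\lambda_i^{(k)}+\alpha\big(1-\textstyle\sum_{j\in\Omega_i}\widehat x_j^{(k)}\big)\Big]_+,$$ $$\lambda_i^{(k+1)}=\tfrac{k+1}{k+3}\mu_i^{(k)}+\tfrac{2}{k+3}\,\alpha\,[z_i^{(k)}]_+,\qquad \overline x_j^{(k)}=\tfrac{k}{k+2}\overline x_j^{(k-1)}+\tfrac{2}{k+2}\widehat x_j^{(k)},$$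 $$x_i^{(k)}=\overline x_i^{(k)}+\Big[1-\textstyle\sum_{j\in\Omega_i}\overline x_j^{(k)}\Big]_+ .$$ *)

theory Defs
  imports Complex_Main
begin

definition simple_graph :: "nat \<Rightarrow> nat set set \<Rightarrow> bool" where
  "simple_graph N E \<longleftrightarrow> (\<forall>e\<in>E. \<exists>i j. i < N \<and> j < N \<and> i \<noteq> j \<and> e = {i, j})"

definition adjA :: "nat set set \<Rightarrow> nat \<Rightarrow> nat \<Rightarrow> real" where
  "adjA E i j = (if i = j \<or> {i, j} \<in> E then 1 else 0)"

definition nbhd :: "nat \<Rightarrow> nat set set \<Rightarrow> nat \<Rightarrow> nat set" where
  "nbhd N E i = {j. j < N \<and> (j = i \<or> {i, j} \<in> E)}"

definition dmax :: "nat \<Rightarrow> nat set set \<Rightarrow> nat" where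
  "dmax N E = Max ((\<lambda>i. card (nbhd N E i) - 1) ` {..<N})"

definition lp_feasible :: "nat \<Rightarrow> nat set set \<Rightarrow> (nat \<Rightarrow> real) \<Rightarrow> bool" where
  "lp_feasible N E x \<longleftrightarrow>
     (\<forall>i<N. (\<Sum>j<N. adjA E i j * x j) \<ge> 1) \<and> (\<forall>i<N. x i \<ge> 0)"

definition lp_optimal :: "nat \<Rightarrow> nat set set \<Rightarrow> (nat \<Rightarrow> real) \<Rightarrow> bool" where
  "lp_optimal N E x \<longleftrightarrow> lp_feasible N E x \<and>
     (\<forall>y. lp_feasible N E y \<longrightarrow> (\<Sum>i<N. x i) \<le> (\<Sum>i<N. y i))"

definition proj01 :: "real \<Rightarrow> real" where
  "proj01 c = min 1 (max 0 c)"

definition pospart :: "real \<Rightarrow> real" where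
  "pospart c = max 0 c"

text \<open>alg_state N E delta alpha k = (lambda^(k), z^(k-1), xbar^(k-1)).\<close>
fun alg_state :: "nat \<Rightarrow> nat set set \<Rightarrow> real \<Rightarrow> real \<Rightarrow> nat \<Rightarrow>
    (nat \<Rightarrow> real) \<times> (nat \<Rightarrow> real) \<times> (nat \<Rightarrow> real)" where
  "alg_state N E \<delta> \<alpha> 0 = ((\<lambda>_. 0), (\<lambda>_. 0), (\<lambda>_. 0))"
| "alg_state N E \<delta> \<alpha> (Suc k) =
     (let (lam, z, xb) = alg_state N E \<delta> \<alpha> k;
          xh = (\<lambda>i. proj01 ((1 / \<delta>) * ((\<Sum>j\<in>nbhd N E i. lam j) - 1)));
          r = (\<lambda>i. 1 - (\<Sum>j\<in>nbhd N E i. xh j));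
          z' = (\<lambda>i. z i + (real k + 1) / 2 * r i);
          \<mu> = (\<lambda>i. pospart (lam i + \<alpha> * r i));
          lam' = (\<lambda>i. (real k + 1) / (real k + 3) * \<mu> i
                      + 2 / (real k + 3) * \<alpha> * pospart (z' i));
          xb' = (\<lambda>j. real k / (real k + 2) * xb j + 2 / (real k + 2) * xh j)
      in (lam', z', xb'))"

definition alg_x :: "nat \<Rightarrow> nat set set \<Rightarrow> real \<Rightarrow> real \<Rightarrow> nat \<Rightarrow> nat \<Rightarrow> real" where
  "alg_x N E \<delta> \<alpha> k i =
     (let xb = snd (snd (alg_state N E \<delta> \<alpha> (Suc k)))
      in xb i + pospart (1 - (\<Sum>j\<in>nbhd N E i. xb j)))"

end

theory Submission
  imports Defs
begin

lemma nbhd_sub: "nbhd N E i \<subseteq> {..<N}" by (auto simp: nbhd_def)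
lemma nbhd_fin[simp]: "finite (nbhd N E i)" by (rule finite_subset[OF nbhd_sub]) simp
lemma nbhd_sym: "i < N \<Longrightarrow> j < N \<Longrightarrow> j \<in> nbhd N E i \<longleftrightarrow> i \<in> nbhd N E j"
  unfolding nbhd_def by (simp add: insert_commute eq_commute)
lemma nbhd_self: "i < N \<Longrightarrow> i \<in> nbhd N E i" by (auto simp: nbhd_def)

lemma sum_nbhd_if: "(\<Sum>j\<in>nbhd N E i. f j) = (\<Sum>j<N. if j \<in> nbhd N E i then f j else 0)"
proof -
  have e: "nbhd N E i = {..<N} \<inter> nbhd N E i" using nbhd_sub by blast
  show ?thesis by (subst e) (simp add: sum.inter_restrict)
qed

lemma swap_nbhd: "(\<Sum>i<N. \<Sum>j\<in>nbhd N E i. F i j) = (\<Sum>j<N. \<Sum>i\<in>nbhd N E j. F i j)"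
proof -
  have "(\<Sum>i<N. \<Sum>j\<in>nbhd N E i. F i j) = (\<Sum>i<N. \<Sum>j<N. if j \<in> nbhd N E i then F i j else 0)"
    by (simp add: sum_nbhd_if)
  also have "\<dots> = (\<Sum>j<N. \<Sum>i<N. if j \<in> nbhd N E i then F i j else 0)" by (rule sum.swap)
  also have "\<dots> = (\<Sum>j<N. \<Sum>i<N. if i \<in> nbhd N E j then F i j else 0)"
    by (intro sum.cong refl) (simp add: nbhd_sym)
  also have "\<dots> = (\<Sum>j<N. \<Sum>i\<in>nbhd N E j. F i j)" by (simp add: sum_nbhd_if)
  finally show ?thesis .
qed

lemma card_nbhd: "i < N \<Longrightarrow> real (card (nbhd N E i)) \<le> real (dmax N E) + 1"
proof -
  assume i: "i < N"
  have "card (nbhd N E i) - 1 \<le> dmax N E" unfolding dmax_def using i by (intro Max_ge) auto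
  thus ?thesis by linarith
qed

lemma cs_sum: "finite S \<Longrightarrow> (\<Sum>i\<in>S. f i)^2 \<le> real (card S) * (\<Sum>i\<in>S. (f i)^2)"
proof -
  assume fin: "finite S"
  have "0 \<le> (\<Sum>i\<in>S. \<Sum>j\<in>S. (f i - f j)^2)" by (intro sum_nonneg) auto
  also have "\<dots> = (\<Sum>i\<in>S. \<Sum>j\<in>S. (f i)^2 + (f j)^2 - 2*(f i * f j))"
    by (simp add: power2_diff mult.assoc)
  also have "\<dots> = (\<Sum>i\<in>S. real (card S) * (f i)^2 + (\<Sum>j\<in>S. (f j)^2) - 2*(f i * (\<Sum>j\<in>S. f j)))"
    by (simp add: sum.distrib sum_subtractf sum_distrib_left)
  also have "\<dots> = 2*(real (card S) * (\<Sum>i\<in>S. (f i)^2)) - 2*(\<Sum>i\<in>S. f i)^2"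
    by (simp add: sum.distrib sum_subtractf power2_eq_square sum_distrib_right[symmetric] sum_distrib_left[symmetric])
  finally show ?thesis by simp
qed

lemma proj_min:
  fixes x c d :: real assumes "d > 0" "0 \<le> x" "x \<le> 1" and p: "p = proj01 ((1/d) * (c - 1))"
  shows "p + d/2*p^2 - p*c + d/2*(x-p)^2 \<le> x + d/2*x^2 - x*c"
proof -
  have "x + d/2*x^2 - x*c - (p + d/2*p^2 - p*c + d/2*(x-p)^2) = (x-p)*(1 - c + d*p)"
    by (simp add: algebra_simps power2_eq_square)
  moreover have "(x-p)*(1 - c + d*p) \<ge> 0"
  proof (cases "(1/d)*(c-1) \<le> 0")
    case True
    hence "p = 0" using p by (simp add: proj01_def)
    moreover have "c - 1 \<le> 0" using True assms(1) by (simp add: divide_le_0_iff)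
    ultimately show ?thesis using assms by simp
  next
    case False
    show ?thesis
    proof (cases "(1/d)*(c-1) \<ge> 1")
      case True
      hence "p = 1" using p by (simp add: proj01_def)
      moreover have "c - 1 \<ge> d" using True assms(1) by (simp add: field_simps)
      ultimately show ?thesis using assms by (simp add: mult_nonpos_nonpos)
    next
      case F2: False
      hence "p = (1/d)*(c-1)" using p False by (simp add: proj01_def)
      hence "1 - c + d*p = 0" using assms(1) by simp
      thus ?thesis by simp
    qed
  qed
  ultimately show ?thesis by linarith
qed

lemma proj_max:
  fixes y l g al :: real assumes "al > 0" "y \<ge> 0"
  shows "g*(y-l) - (y-l)^2/(2*al) \<le> g*(pospart (l + al*g) - l) - (pospart (l + al*g) - l)^2/(2*al)"
proof -
  let ?p = "l + al*g" let ?m = "pospart ?p"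
  have e: "\<And>t. g*(t-l) - (t-l)^2/(2*al) = al*g^2/2 - (t - ?p)^2/(2*al)"
    using assms(1) by (simp add: field_simps power2_eq_square)
  have "(?m - ?p)^2 \<le> (y - ?p)^2"
  proof (cases "?p \<ge> 0")
    case True thus ?thesis by (simp add: pospart_def)
  next
    case False
    hence "0 < -?p" "-?p \<le> y - ?p" using assms(2) by auto
    hence "(-?p)^2 \<le> (y - ?p)^2" by (intro power_mono) auto
    thus ?thesis using False by (simp add: pospart_def)
  qed
  hence "(?m - ?p)^2/(2*al) \<le> (y - ?p)^2/(2*al)" using assms(1) by (simp add: divide_right_mono)
  thus ?thesis by (simp only: e)
qed

lemma quad_lemma:
  fixes z lm al :: real assumes "al > 0" "lm \<ge> 0"
  shows "z*lm - lm^2/(2*al) + (lm - al*pospart z)^2/(2*al) \<le> z*(al*pospart z) - (al*pospart z)^2/(2*al)"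
proof (cases "z \<ge> 0")
  case True thus ?thesis using assms by (simp add: pospart_def field_simps power2_eq_square)
next
  case False thus ?thesis using assms by (simp add: pospart_def field_simps power2_eq_square mult_nonneg_nonpos)
qed

locale alg =
  fixes N :: nat and E :: "nat set set" and \<delta> \<alpha> :: real
  assumes dpos: "\<delta> > 0" and apos: "\<alpha> > 0"
    and astep: "\<alpha> * (real (dmax N E) + 1)^2 \<le> \<delta>"
begin

abbreviation "D \<equiv> real (dmax N E) + 1"

definition Lag :: "(nat \<Rightarrow> real) \<Rightarrow> (nat \<Rightarrow> real) \<Rightarrow> real" where
  "Lag x l = (\<Sum>i<N. x i + \<delta>/2 * (x i)^2) + (\<Sum>i<N. l i * (1 - (\<Sum>j\<in>nbhd N E i. x j)))"

definition xhat :: "(nat \<Rightarrow> real) \<Rightarrow> nat \<Rightarrow> real" where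
  "xhat l = (\<lambda>i. proj01 ((1 / \<delta>) * ((\<Sum>j\<in>nbhd N E i. l j) - 1)))"

definition grad :: "(nat \<Rightarrow> real) \<Rightarrow> nat \<Rightarrow> real" where
  "grad l = (\<lambda>i. 1 - (\<Sum>j\<in>nbhd N E i. xhat l j))"

definition phi :: "(nat \<Rightarrow> real) \<Rightarrow> real" where
  "phi l = Lag (xhat l) l"

definition ip :: "(nat \<Rightarrow> real) \<Rightarrow> (nat \<Rightarrow> real) \<Rightarrow> real" where
  "ip u w = (\<Sum>i<N. u i * w i)"

definition nsq :: "(nat \<Rightarrow> real) \<Rightarrow> real" where
  "nsq u = (\<Sum>i<N. (u i)^2)"

lemma Lag_alt: "Lag x l = (\<Sum>i<N. l i) + (\<Sum>j<N. x j + \<delta>/2 * (x j)^2 - x j * (\<Sum>i\<in>nbhd N E j. l i))"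
proof -
  have "(\<Sum>i<N. l i * (\<Sum>j\<in>nbhd N E i. x j)) = (\<Sum>i<N. \<Sum>j\<in>nbhd N E i. l i * x j)"
    by (simp add: sum_distrib_left)
  also have "\<dots> = (\<Sum>j<N. \<Sum>i\<in>nbhd N E j. l i * x j)" by (rule swap_nbhd)
  also have "\<dots> = (\<Sum>j<N. x j * (\<Sum>i\<in>nbhd N E j. l i))"
    by (simp add: sum_distrib_left mult.commute)
  finally have e: "(\<Sum>i<N. l i * (\<Sum>j\<in>nbhd N E i. x j)) = (\<Sum>j<N. x j * (\<Sum>i\<in>nbhd N E j. l i))" .
  have e2: "(\<Sum>i<N. l i * (1 - (\<Sum>j\<in>nbhd N E i. x j))) = (\<Sum>i<N. l i) - (\<Sum>i<N. l i * (\<Sum>j\<in>nbhd N E i. x j))"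
    by (simp add: right_diff_distrib sum_subtractf)
  have e3: "(\<Sum>j<N. x j + \<delta>/2 * (x j)^2 - x j * (\<Sum>i\<in>nbhd N E j. l i)) = (\<Sum>j<N. x j + \<delta>/2 * (x j)^2) - (\<Sum>j<N. x j * (\<Sum>i\<in>nbhd N E j. l i))"
    by (rule sum_subtractf)
  show ?thesis unfolding Lag_def e2 e3 e by simp
qed

lemma sum_add_scale: "(\<Sum>j\<in>S. f j + (c::real) * g j) = sum f S + c * sum g S"
  by (simp add: sum.distrib sum_distrib_left)

lemma Lag_min:
  assumes "\<And>i. i < N \<Longrightarrow> 0 \<le> x i \<and> x i \<le> 1"
  shows "Lag (xhat l) l + \<delta>/2 * nsq (\<lambda>i. x i - xhat l i) \<le> Lag x l"
proof -
  have "\<And>j. j < N \<Longrightarrow> xhat l j + \<delta>/2 * (xhat l j)^2 - xhat l j * (\<Sum>i\<in>nbhd N E j. l i) + \<delta>/2 * (x j - xhat l j)^2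
        \<le> x j + \<delta>/2 * (x j)^2 - x j * (\<Sum>i\<in>nbhd N E j. l i)"
    using proj_min[OF dpos] assms unfolding xhat_def by simp
  hence "(\<Sum>j<N. xhat l j + \<delta>/2 * (xhat l j)^2 - xhat l j * (\<Sum>i\<in>nbhd N E j. l i) + \<delta>/2 * (x j - xhat l j)^2)
        \<le> (\<Sum>j<N. x j + \<delta>/2 * (x j)^2 - x j * (\<Sum>i\<in>nbhd N E j. l i))"
    by (intro sum_mono) auto
  thus ?thesis unfolding Lag_alt[of x] Lag_alt[of "xhat l"] nsq_def sum_add_scale by linarith
qed

lemma xhat_box: "0 \<le> xhat l i \<and> xhat l i \<le> 1"
  unfolding xhat_def proj01_def by simp

lemma nsq_nonneg: "nsq u \<ge> 0" unfolding nsq_def by (intro sum_nonneg) auto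

lemma Lag_lin: "Lag x m = Lag x l + ip (\<lambda>i. 1 - (\<Sum>j\<in>nbhd N E i. x j)) (\<lambda>i. m i - l i)"
proof -
  have "(\<Sum>i<N. m i * (1 - (\<Sum>j\<in>nbhd N E i. x j))) = (\<Sum>i<N. l i * (1 - (\<Sum>j\<in>nbhd N E i. x j)) + (1 - (\<Sum>j\<in>nbhd N E i. x j)) * (m i - l i))"
    by (intro sum.cong refl) (simp add: algebra_simps)
  thus ?thesis unfolding Lag_def ip_def by (simp add: sum.distrib)
qed

lemma concave: "phi m \<le> phi l + ip (grad l) (\<lambda>i. m i - l i)"
proof -
  have "phi m \<le> Lag (xhat l) m"
  proof -
    have "Lag (xhat m) m + \<delta>/2 * nsq (\<lambda>i. xhat l i - xhat m i) \<le> Lag (xhat l) m"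
      by (rule Lag_min) (simp add: xhat_box)
    moreover have "0 \<le> \<delta>/2 * nsq (\<lambda>i. xhat l i - xhat m i)" using dpos nsq_nonneg by simp
    ultimately show ?thesis unfolding phi_def by linarith
  qed
  also have "\<dots> = phi l + ip (grad l) (\<lambda>i. m i - l i)"
    unfolding phi_def grad_def by (rule Lag_lin)
  finally show ?thesis .
qed

lemma ip_sym: "(\<Sum>i<N. (\<Sum>j\<in>nbhd N E i. x j) * (y i::real)) = (\<Sum>j<N. x j * (\<Sum>i\<in>nbhd N E j. y i))"
proof -
  have "(\<Sum>i<N. (\<Sum>j\<in>nbhd N E i. x j) * y i) = (\<Sum>i<N. \<Sum>j\<in>nbhd N E i. x j * y i)"
    by (intro sum.cong refl) (rule sum_distrib_right)
  also have "\<dots> = (\<Sum>j<N. \<Sum>i\<in>nbhd N E j. x j * y i)" by (rule swap_nbhd)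
  also have "\<dots> = (\<Sum>j<N. x j * (\<Sum>i\<in>nbhd N E j. y i))" by (simp add: sum_distrib_left)
  finally show ?thesis .
qed

lemma Anorm: "nsq (\<lambda>j. \<Sum>i\<in>nbhd N E j. w i) \<le> D^2 * nsq w"
proof -
  have D0: "D \<ge> 0" by simp
  have "\<And>j. j < N \<Longrightarrow> (\<Sum>i\<in>nbhd N E j. w i)^2 \<le> D * (\<Sum>i\<in>nbhd N E j. (w i)^2)"
  proof -
    fix j assume j: "j < N"
    have "(\<Sum>i\<in>nbhd N E j. w i)^2 \<le> real (card (nbhd N E j)) * (\<Sum>i\<in>nbhd N E j. (w i)^2)"
      by (rule cs_sum) simp
    also have "\<dots> \<le> D * (\<Sum>i\<in>nbhd N E j. (w i)^2)"
      by (rule mult_right_mono[OF card_nbhd[OF j]]) (simp add: sum_nonneg)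
    finally show "(\<Sum>i\<in>nbhd N E j. w i)^2 \<le> D * (\<Sum>i\<in>nbhd N E j. (w i)^2)" .
  qed
  hence "nsq (\<lambda>j. \<Sum>i\<in>nbhd N E j. w i) \<le> (\<Sum>j<N. D * (\<Sum>i\<in>nbhd N E j. (w i)^2))"
    unfolding nsq_def by (intro sum_mono) auto
  also have "\<dots> = D * (\<Sum>j<N. \<Sum>i\<in>nbhd N E j. (w i)^2)" by (simp add: sum_distrib_left)
  also have "(\<Sum>j<N. \<Sum>i\<in>nbhd N E j. (w i)^2) = (\<Sum>i<N. \<Sum>j\<in>nbhd N E i. (w i)^2)"
    by (rule swap_nbhd[symmetric])
  also have "\<dots> = (\<Sum>i<N. real (card (nbhd N E i)) * (w i)^2)" by simp
  also have "\<dots> \<le> (\<Sum>i<N. D * (w i)^2)"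
    by (intro sum_mono mult_right_mono card_nbhd) auto
  also have "\<dots> = D * nsq w" unfolding nsq_def by (simp add: sum_distrib_left)
  finally show ?thesis using D0 by (simp add: power2_eq_square mult_left_mono)
qed

lemma descent: "phi l + ip (grad l) (\<lambda>i. m i - l i) - D^2/(2*\<delta>) * nsq (\<lambda>i. m i - l i) \<le> phi m"
proof -
  define x1 where "x1 = xhat l"
  define x2 where "x2 = xhat m"
  define u where "u = (\<lambda>j. \<Sum>i\<in>nbhd N E j. m i - l i)"
  have "phi m = Lag x2 l + ip (\<lambda>i. 1 - (\<Sum>j\<in>nbhd N E i. x2 j)) (\<lambda>i. m i - l i)"
    unfolding phi_def x2_def by (rule Lag_lin)
  moreover have "phi l + \<delta>/2 * nsq (\<lambda>i. x2 i - x1 i) \<le> Lag x2 l"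
    unfolding phi_def x1_def by (rule Lag_min) (simp add: x2_def xhat_box)
  moreover have "ip (\<lambda>i. 1 - (\<Sum>j\<in>nbhd N E i. x2 j)) (\<lambda>i. m i - l i)
      = ip (grad l) (\<lambda>i. m i - l i) + (\<Sum>i<N. (\<Sum>j\<in>nbhd N E i. x1 j - x2 j) * (m i - l i))"
    unfolding ip_def grad_def x1_def by (simp add: sum.distrib[symmetric] sum_subtractf algebra_simps)
  moreover have "(\<Sum>i<N. (\<Sum>j\<in>nbhd N E i. x1 j - x2 j) * (m i - l i)) = (\<Sum>j<N. (x1 j - x2 j) * u j)"
    unfolding u_def by (rule ip_sym)
  moreover have "\<delta>/2 * nsq (\<lambda>i. x2 i - x1 i) + (\<Sum>j<N. (x1 j - x2 j) * u j) \<ge> -(nsq u / (2*\<delta>))"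
  proof -
    have "\<And>j. \<delta>/2 * (x2 j - x1 j)^2 + (x1 j - x2 j) * u j \<ge> -((u j)^2 / (2*\<delta>))"
    proof -
      fix j
      have "0 \<le> (\<delta> * (x2 j - x1 j) - u j)^2 / (2*\<delta>)" using dpos by simp
      also have "\<dots> = \<delta>/2 * (x2 j - x1 j)^2 + (x1 j - x2 j) * u j + (u j)^2 / (2*\<delta>)"
        using dpos by (simp add: field_simps power2_eq_square)
      finally show "\<delta>/2 * (x2 j - x1 j)^2 + (x1 j - x2 j) * u j \<ge> -((u j)^2 / (2*\<delta>))" by linarith
    qed
    hence "(\<Sum>j<N. -((u j)^2 / (2*\<delta>))) \<le> (\<Sum>j<N. \<delta>/2 * (x2 j - x1 j)^2 + (x1 j - x2 j) * u j)"
      by (intro sum_mono) auto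
    thus ?thesis unfolding nsq_def by (simp add: sum.distrib sum_distrib_left sum_divide_distrib sum_negf)
  qed
  moreover have "nsq u / (2*\<delta>) \<le> D^2/(2*\<delta>) * nsq (\<lambda>i. m i - l i)"
  proof -
    have "nsq u \<le> D^2 * nsq (\<lambda>i. m i - l i)" unfolding u_def by (rule Anorm)
    thus ?thesis using dpos by (simp add: divide_right_mono)
  qed
  ultimately show ?thesis by linarith
qed

definition mu :: "(nat \<Rightarrow> real) \<Rightarrow> nat \<Rightarrow> real" where
  "mu l = (\<lambda>i. pospart (l i + \<alpha> * grad l i))"

lemma STEP:
  assumes y: "\<And>i. i < N \<Longrightarrow> y i \<ge> 0"
  shows "phi l + ip (grad l) (\<lambda>i. y i - l i) - nsq (\<lambda>i. y i - l i)/(2*\<alpha>) \<le> phi (mu l)"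
proof -
  have "\<And>i. i < N \<Longrightarrow> grad l i * (y i - l i) - (y i - l i)^2/(2*\<alpha>) \<le> grad l i * (mu l i - l i) - (mu l i - l i)^2/(2*\<alpha>)"
    unfolding mu_def by (rule proj_max[OF apos y])
  hence "(\<Sum>i<N. grad l i * (y i - l i) - (y i - l i)^2/(2*\<alpha>)) \<le> (\<Sum>i<N. grad l i * (mu l i - l i) - (mu l i - l i)^2/(2*\<alpha>))"
    by (intro sum_mono) auto
  hence 1: "ip (grad l) (\<lambda>i. y i - l i) - nsq (\<lambda>i. y i - l i)/(2*\<alpha>) \<le> ip (grad l) (\<lambda>i. mu l i - l i) - nsq (\<lambda>i. mu l i - l i)/(2*\<alpha>)"
    unfolding ip_def nsq_def by (simp add: sum_subtractf sum_divide_distrib)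
  have 2: "phi l + ip (grad l) (\<lambda>i. mu l i - l i) - D^2/(2*\<delta>) * nsq (\<lambda>i. mu l i - l i) \<le> phi (mu l)"
    by (rule descent)
  have "D^2/(2*\<delta>) \<le> 1/(2*\<alpha>)" using astep apos dpos by (simp add: field_simps)
  hence "D^2/(2*\<delta>) * nsq (\<lambda>i. mu l i - l i) \<le> 1/(2*\<alpha>) * nsq (\<lambda>i. mu l i - l i)"
    using nsq_nonneg[of "\<lambda>i. mu l i - l i"] by (rule mult_right_mono)
  hence 3: "D^2/(2*\<delta>) * nsq (\<lambda>i. mu l i - l i) \<le> nsq (\<lambda>i. mu l i - l i)/(2*\<alpha>)" by simp
  show ?thesis using 1 2 3 by linarith
qed

end

context alg begin

definition lam :: "nat \<Rightarrow> nat \<Rightarrow> real" where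
  "lam k = fst (alg_state N E \<delta> \<alpha> k)"

definition a :: "nat \<Rightarrow> real" where "a t = (real t + 1) / 2"
definition AA :: "nat \<Rightarrow> real" where "AA k = (real k + 1) * (real k + 2) / 4"

definition Z :: "nat \<Rightarrow> nat \<Rightarrow> real" where
  "Z k i = (\<Sum>t\<le>k. a t * grad (lam t) i)"
definition XB :: "nat \<Rightarrow> nat \<Rightarrow> real" where
  "XB k i = (\<Sum>t\<le>k. a t * xhat (lam t) i) / AA k"

lemma AA_pos: "AA k > 0" unfolding AA_def by simp

lemma sum_a: "(\<Sum>t\<le>k. a t) = AA k"
  by (induction k) (simp_all add: a_def AA_def field_simps)

lemma lam0: "lam 0 = (\<lambda>_. 0)" by (simp add: lam_def)

lemma ratio1: "AA k / AA (Suc k) = (real k + 1) / (real k + 3)"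
  using AA_pos[of "Suc k"] by (subst nonzero_divide_eq_eq) (auto simp: AA_def field_simps)
lemma ratio2: "a (Suc k) / AA (Suc k) = 2 / (real k + 3)"
  using AA_pos[of "Suc k"] by (subst nonzero_divide_eq_eq) (auto simp: AA_def a_def field_simps)

lemma alg_Suc: "alg_state N E \<delta> \<alpha> (Suc k) =
   ((\<lambda>i. (real k + 1) / (real k + 3) * mu (lam k) i
        + 2 / (real k + 3) * \<alpha> * pospart (fst (snd (alg_state N E \<delta> \<alpha> k)) i + (real k + 1) / 2 * grad (lam k) i)),
    (\<lambda>i. fst (snd (alg_state N E \<delta> \<alpha> k)) i + (real k + 1) / 2 * grad (lam k) i),
    (\<lambda>j. real k / (real k + 2) * snd (snd (alg_state N E \<delta> \<alpha> k)) j + 2 / (real k + 2) * xhat (lam k) j))"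
proof -
  obtain l z xb where e: "alg_state N E \<delta> \<alpha> k = (l, z, xb)" by (metis prod_cases3)
  show ?thesis by (simp add: e lam_def mu_def grad_def xhat_def Let_def)
qed

lemma snd_state: "snd (alg_state N E \<delta> \<alpha> (Suc k)) = (Z k, XB k)"
proof (induction k)
  case 0
  show ?case unfolding alg_Suc by (simp add: Z_def XB_def a_def AA_def lam0)
next
  case (Suc k)
  have z: "fst (snd (alg_state N E \<delta> \<alpha> (Suc k))) = Z k" and xb: "snd (snd (alg_state N E \<delta> \<alpha> (Suc k))) = XB k"
    using Suc by simp_all
  have 1: "Z k i + (real (Suc k) + 1) / 2 * grad (lam (Suc k)) i = Z (Suc k) i" for i
    by (simp add: Z_def a_def)
  have 2: "real (Suc k) / (real (Suc k) + 2) * XB k j + 2 / (real (Suc k) + 2) * xhat (lam (Suc k)) j = XB (Suc k) j" for j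
  proof -
    have "XB (Suc k) j = (AA k * XB k j + a (Suc k) * xhat (lam (Suc k)) j) / AA (Suc k)"
      using AA_pos[of k] by (simp add: XB_def)
    also have "\<dots> = AA k / AA (Suc k) * XB k j + a (Suc k) / AA (Suc k) * xhat (lam (Suc k)) j"
      by (simp add: add_divide_distrib)
    also have "AA k / AA (Suc k) = (real k + 1) / (real k + 3)"
      using AA_pos[of "Suc k"] by (subst nonzero_divide_eq_eq) (auto simp: AA_def field_simps)
    also have "a (Suc k) / AA (Suc k) = 2 / (real k + 3)"
      using AA_pos[of "Suc k"] by (subst nonzero_divide_eq_eq) (auto simp: AA_def a_def field_simps)
    finally show ?thesis by (simp add: add.commute)
  qed
  show ?case unfolding alg_Suc[of "Suc k"] z xb using 1 2 by auto
qed

lemma zrec: "fst (snd (alg_state N E \<delta> \<alpha> k)) i + (real k + 1) / 2 * grad (lam k) i = Z k i"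
proof (cases k)
  case 0 thus ?thesis by (simp add: Z_def a_def)
next
  case (Suc k')
  have "fst (snd (alg_state N E \<delta> \<alpha> k)) = Z k'" using snd_state[of k'] Suc by simp
  thus ?thesis using Suc by (simp add: Z_def a_def)
qed

lemma lam_Suc: "lam (Suc k) i = (real k + 1) / (real k + 3) * mu (lam k) i + 2 / (real k + 3) * \<alpha> * pospart (Z k i)"
proof -
  have "lam (Suc k) = fst (alg_state N E \<delta> \<alpha> (Suc k))" by (simp only: lam_def)
  hence "lam (Suc k) i = (real k + 1) / (real k + 3) * mu (lam k) i + 2 / (real k + 3) * \<alpha> * pospart (fst (snd (alg_state N E \<delta> \<alpha> k)) i + (real k + 1) / 2 * grad (lam k) i)"
    by (simp only: alg_Suc fst_conv)
  thus ?thesis by (simp only: zrec)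
qed

lemma pospart_nonneg: "pospart c \<ge> 0" by (simp add: pospart_def)

lemma lam_nonneg: "lam k i \<ge> 0"
proof (cases k)
  case 0 thus ?thesis by (simp add: lam0)
next
  case (Suc k') thus ?thesis using apos
    by (simp add: lam_Suc mu_def pospart_nonneg)
qed

lemma alg_x_eq: "alg_x N E \<delta> \<alpha> k i = XB k i + pospart (1 - (\<Sum>j\<in>nbhd N E i. XB k j))"
  unfolding alg_x_def using snd_state[of k] by (simp add: Let_def)

end

context alg begin

definition ell :: "nat \<Rightarrow> (nat \<Rightarrow> real) \<Rightarrow> real" where
  "ell k l = (\<Sum>t\<le>k. a t * (phi (lam t) + ip (grad (lam t)) (\<lambda>i. l i - lam t i)))"

lemma ip_wsum: "(\<Sum>t\<le>k. a t * ip (G t) w) = ip (\<lambda>i. \<Sum>t\<le>k. a t * G t i) w"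
proof -
  have "(\<Sum>t\<le>k. a t * ip (G t) w) = (\<Sum>t\<le>k. \<Sum>i<N. a t * G t i * w i)"
    unfolding ip_def by (simp add: sum_distrib_left mult.assoc)
  also have "\<dots> = (\<Sum>i<N. \<Sum>t\<le>k. a t * G t i * w i)" by (rule sum.swap)
  also have "\<dots> = ip (\<lambda>i. \<Sum>t\<le>k. a t * G t i) w"
    unfolding ip_def by (simp add: sum_distrib_right)
  finally show ?thesis .
qed

lemma ip_split: "ip g (\<lambda>i. l i - c i) = ip g (\<lambda>i. v i - c i) + ip g (\<lambda>i. l i - v i)"
proof -
  have "(\<Sum>i<N. g i * (l i - c i)) = (\<Sum>i<N. g i * (v i - c i) + g i * (l i - v i))"
    by (intro sum.cong refl) (simp add: algebra_simps)
  thus ?thesis unfolding ip_def by (simp add: sum.distrib)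
qed

lemma ell_lin: "ell k l = ell k v + ip (Z k) (\<lambda>i. l i - v i)"
proof -
  have "ell k l = (\<Sum>t\<le>k. a t * (phi (lam t) + ip (grad (lam t)) (\<lambda>i. v i - lam t i)) + a t * ip (grad (lam t)) (\<lambda>i. l i - v i))"
    unfolding ell_def
  proof (intro sum.cong refl)
    fix t
    have "ip (grad (lam t)) (\<lambda>i. l i - lam t i) = ip (grad (lam t)) (\<lambda>i. v i - lam t i) + ip (grad (lam t)) (\<lambda>i. l i - v i)"
      by (rule ip_split)
    thus "a t * (phi (lam t) + ip (grad (lam t)) (\<lambda>i. l i - lam t i)) = a t * (phi (lam t) + ip (grad (lam t)) (\<lambda>i. v i - lam t i)) + a t * ip (grad (lam t)) (\<lambda>i. l i - v i)"
      by (simp add: algebra_simps)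
  qed
  also have "\<dots> = ell k v + (\<Sum>t\<le>k. a t * ip (grad (lam t)) (\<lambda>i. l i - v i))"
    unfolding ell_def by (simp add: sum.distrib)
  also have "(\<Sum>t\<le>k. a t * ip (grad (lam t)) (\<lambda>i. l i - v i)) = ip (Z k) (\<lambda>i. l i - v i)"
    unfolding ip_wsum Z_def ..
  finally show ?thesis .
qed

lemma a_pos: "a t > 0" unfolding a_def by simp

lemma INV: "(\<And>i. i < N \<Longrightarrow> l i \<ge> 0) \<Longrightarrow> ell k l - nsq l / (2*\<alpha>) \<le> AA k * phi (mu (lam k))"
proof (induction k arbitrary: l)
  case 0
  have "phi (lam 0) + ip (grad (lam 0)) (\<lambda>i. l i - lam 0 i) - nsq (\<lambda>i. l i - lam 0 i) / (2*\<alpha>) \<le> phi (mu (lam 0))"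
    by (rule STEP) (use 0 in auto)
  moreover have "nsq (\<lambda>i. l i - lam 0 i) = nsq l" by (simp add: lam0)
  moreover have "nsq l / (2*\<alpha>) \<ge> 0" using nsq_nonneg apos by simp
  ultimately have "(phi (lam 0) + ip (grad (lam 0)) (\<lambda>i. l i - lam 0 i)) - nsq l / (2*\<alpha>) \<le> phi (mu (lam 0))" 
    by simp
  hence "1/2 * ((phi (lam 0) + ip (grad (lam 0)) (\<lambda>i. l i - lam 0 i)) - nsq l / (2*\<alpha>)) \<le> 1/2 * phi (mu (lam 0))"
    by simp
  moreover have "ell 0 l = 1/2 * (phi (lam 0) + ip (grad (lam 0)) (\<lambda>i. l i - lam 0 i))"
    unfolding ell_def by (simp add: a_def)
  moreover have "AA 0 = 1/2" by (simp add: AA_def)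
  moreover have "1/2 * (nsq l / (2*\<alpha>)) \<le> nsq l / (2*\<alpha>)" using \<open>nsq l / (2*\<alpha>) \<ge> 0\<close> by simp
  ultimately show ?case by (simp only: right_diff_distrib)
next
  case (Suc k)
  define A where "A = AA k"
  define b where "b = a (Suc k)"
  define A' where "A' = AA (Suc k)"
  define l' where "l' = lam (Suc k)"
  define g' where "g' = grad l'"
  define m where "m = mu (lam k)"
  define v where "v = (\<lambda>i. \<alpha> * pospart (Z k i))"
  define y where "y = (\<lambda>i. (A * m i + b * l i) / A')"
  have Apos: "A > 0" unfolding A_def by (rule AA_pos)
  have bpos: "b > 0" unfolding b_def by (rule a_pos)
  have A'pos: "A' > 0" unfolding A'_def by (rule AA_pos)
  have A'eq: "A' = A + b" unfolding A'_def A_def b_def by (simp add: AA_def a_def field_simps)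
  have F1: "l' i = (A * m i + b * v i) / A'" for i
  proof -
    have "(A * m i + b * v i) / A' = A / A' * m i + b / A' * v i" by (simp add: add_divide_distrib)
    also have "\<dots> = (real k + 1) / (real k + 3) * m i + 2 / (real k + 3) * v i"
      unfolding A_def A'_def b_def ratio1 ratio2 ..
    finally show ?thesis unfolding l'_def m_def v_def lam_Suc by (simp add: mult.assoc)
  qed
  have vnn: "v i \<ge> 0" for i unfolding v_def using apos pospart_nonneg by simp
  have mnn: "m i \<ge> 0" for i unfolding m_def mu_def using pospart_nonneg by simp
  have Q: "ell k l - nsq l/(2*\<alpha>) \<le> ell k v - nsq v/(2*\<alpha>) - nsq (\<lambda>i. l i - v i)/(2*\<alpha>)"
  proof -
    have "\<And>i. i < N \<Longrightarrow> Z k i * l i - (l i)^2/(2*\<alpha>) + (l i - v i)^2/(2*\<alpha>) \<le> Z k i * v i - (v i)^2/(2*\<alpha>)"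
      unfolding v_def by (rule quad_lemma[OF apos Suc.prems])
    hence "(\<Sum>i<N. Z k i * l i - (l i)^2/(2*\<alpha>) + (l i - v i)^2/(2*\<alpha>)) \<le> (\<Sum>i<N. Z k i * v i - (v i)^2/(2*\<alpha>))"
      by (intro sum_mono) auto
    hence "(\<Sum>i<N. Z k i * l i) - nsq l/(2*\<alpha>) + nsq (\<lambda>i. l i - v i)/(2*\<alpha>) \<le> (\<Sum>i<N. Z k i * v i) - nsq v/(2*\<alpha>)"
      unfolding nsq_def by (simp add: sum.distrib sum_subtractf sum_divide_distrib)
    moreover have "ip (Z k) (\<lambda>i. l i - v i) = (\<Sum>i<N. Z k i * l i) - (\<Sum>i<N. Z k i * v i)"
      unfolding ip_def by (simp add: right_diff_distrib sum_subtractf)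
    ultimately show ?thesis using ell_lin[of k l v] by linarith
  qed
  have IHv: "ell k v - nsq v/(2*\<alpha>) \<le> A * phi m"
    unfolding A_def m_def by (rule Suc.IH) (rule vnn)
  have C: "phi m \<le> phi l' + ip g' (\<lambda>i. m i - l' i)" unfolding g'_def by (rule concave)
  have E: "ell (Suc k) l = ell k l + b * (phi l' + ip g' (\<lambda>i. l i - l' i))"
    unfolding ell_def b_def l'_def g'_def by simp
  have I1: "A * ip g' (\<lambda>i. m i - l' i) + b * ip g' (\<lambda>i. l i - l' i) = A' * ip g' (\<lambda>i. y i - l' i)"
  proof -
    have "\<And>i. A * (g' i * (m i - l' i)) + b * (g' i * (l i - l' i)) = A' * (g' i * (y i - l' i))"
    proof -
      fix i
      have "A' * y i = A * m i + b * l i" unfolding y_def using A'pos by simp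
      thus "A * (g' i * (m i - l' i)) + b * (g' i * (l i - l' i)) = A' * (g' i * (y i - l' i))"
        unfolding A'eq by (simp add: algebra_simps)
    qed
    thus ?thesis unfolding ip_def by (simp add: sum_distrib_left sum.distrib[symmetric])
  qed
  have I2: "nsq (\<lambda>i. l i - v i) = (A'/b)^2 * nsq (\<lambda>i. y i - l' i)"
  proof -
    have "\<And>i. (l i - v i)^2 = (A'/b)^2 * (y i - l' i)^2"
    proof -
      fix i
      have "y i - l' i = ((A * m i + b * l i) - (A * m i + b * v i)) / A'" unfolding y_def F1
        by (rule diff_divide_distrib[symmetric])
      also have "(A * m i + b * l i) - (A * m i + b * v i) = b * (l i - v i)" by (simp add: algebra_simps)
      finally have "y i - l' i = (b * (l i - v i)) / A'" .
      hence "A' * (y i - l' i) = b * (l i - v i)" using A'pos by simp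
      hence "l i - v i = (A'/b) * (y i - l' i)" using bpos by (simp add: field_simps)
      thus "(l i - v i)^2 = (A'/b)^2 * (y i - l' i)^2" by (simp only: power_mult_distrib)
    qed
    thus ?thesis unfolding nsq_def by (simp add: sum_distrib_left)
  qed
  have Y: "y i \<ge> 0" if "i < N" for i
  proof -
    have "0 \<le> A * m i + b * l i" using Apos bpos mnn[of i] Suc.prems[OF that] by simp
    thus ?thesis unfolding y_def using A'pos by (rule divide_nonneg_pos)
  qed
  have S: "phi l' + ip g' (\<lambda>i. y i - l' i) - nsq (\<lambda>i. y i - l' i)/(2*\<alpha>) \<le> phi (mu l')"
    unfolding g'_def by (rule STEP) (rule Y)
  have W: "A' \<le> (A'/b)^2"
  proof -
    have "b^2 \<le> A'" unfolding b_def A'_def by (simp add: a_def AA_def power2_eq_square field_simps)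
    hence "A' * (b*b) \<le> A' * A'" using A'pos by (simp add: mult_left_mono power2_eq_square)
    hence "A' * (b*b) / (b*b) \<le> A' * A' / (b*b)" by (rule divide_right_mono) simp
    thus ?thesis using bpos by (simp add: power_divide power2_eq_square)
  qed
  have nn: "nsq (\<lambda>i. y i - l' i) \<ge> 0" by (rule nsq_nonneg)
  have W2: "A' * (nsq (\<lambda>i. y i - l' i)/(2*\<alpha>)) \<le> (A'/b)^2 * nsq (\<lambda>i. y i - l' i)/(2*\<alpha>)"
  proof -
    have "0 \<le> nsq (\<lambda>i. y i - l' i)/(2*\<alpha>)" using nn apos by simp
    from mult_right_mono[OF W this] show ?thesis by simp
  qed
  have C2: "A * phi m \<le> A * (phi l' + ip g' (\<lambda>i. m i - l' i))"
    using C Apos by (intro mult_left_mono) auto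
  have S2: "A' * (phi l' + ip g' (\<lambda>i. y i - l' i) - nsq (\<lambda>i. y i - l' i)/(2*\<alpha>)) \<le> A' * phi (mu l')"
    using S A'pos by (intro mult_left_mono) auto
  have I2': "nsq (\<lambda>i. l i - v i)/(2*\<alpha>) = (A'/b)^2 * nsq (\<lambda>i. y i - l' i)/(2*\<alpha>)"
    by (simp only: I2)
  have D1: "A * (phi l' + ip g' (\<lambda>i. m i - l' i)) + b * (phi l' + ip g' (\<lambda>i. l i - l' i))
     = A' * phi l' + A' * ip g' (\<lambda>i. y i - l' i)"
    using I1 unfolding A'eq by (simp add: ring_distribs)
  have D2: "A' * (phi l' + ip g' (\<lambda>i. y i - l' i) - nsq (\<lambda>i. y i - l' i)/(2*\<alpha>))
     = A' * phi l' + A' * ip g' (\<lambda>i. y i - l' i) - A' * (nsq (\<lambda>i. y i - l' i)/(2*\<alpha>))"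
    by (simp only: ring_distribs)
  define P where "P = phi l'"
  define ipl where "ipl = ip g' (\<lambda>i. l i - l' i)"
  define ipm where "ipm = ip g' (\<lambda>i. m i - l' i)"
  define ipy where "ipy = ip g' (\<lambda>i. y i - l' i)"
  define ny where "ny = nsq (\<lambda>i. y i - l' i)"
  define c where "c = (A'/b)^2"
  define nlv where "nlv = nsq (\<lambda>i. l i - v i)/(2*\<alpha>)"
  have "ell (Suc k) l - nsq l/(2*\<alpha>) = (ell k l - nsq l/(2*\<alpha>)) + b*(P + ipl)"
    using E unfolding P_def ipl_def by linarith
  also have "\<dots> \<le> (ell k v - nsq v/(2*\<alpha>) - nlv) + b*(P + ipl)"
    using Q unfolding nlv_def by linarith
  also have "\<dots> \<le> A * phi m - nlv + b*(P + ipl)" using IHv by linarith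
  also have "\<dots> \<le> A * (P + ipm) + b*(P + ipl) - c * ny / (2*\<alpha>)"
    using C2 I2' unfolding nlv_def P_def ipm_def c_def ny_def by linarith
  also have "\<dots> = A' * P + A' * ipy - c * ny / (2*\<alpha>)"
    using D1 unfolding P_def ipm_def ipl_def ipy_def by linarith
  also have "\<dots> \<le> A' * P + A' * ipy - A' * (ny / (2*\<alpha>))"
    using W2 unfolding c_def ny_def by linarith
  also have "\<dots> = A' * (P + ipy - ny / (2*\<alpha>))"
    using D2 unfolding P_def ipy_def ny_def by linarith
  also have "\<dots> \<le> A' * phi (mu l')"
    using S2 unfolding P_def ipy_def ny_def by linarith
  finally show ?case unfolding A'_def l'_def .
qed

end

context alg begin

lemma adj_sum: "i < N \<Longrightarrow> (\<Sum>j<N. adjA E i j * x j) = (\<Sum>j\<in>nbhd N E i. x j)"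
  unfolding sum_nbhd_if by (intro sum.cong refl) (auto simp: adjA_def nbhd_def)

lemma feas_nbhd: "lp_feasible N E xs \<Longrightarrow> i < N \<Longrightarrow> (\<Sum>j\<in>nbhd N E i. xs j) \<ge> 1"
  unfolding lp_feasible_def using adj_sum by metis

lemma feas_nn: "lp_feasible N E xs \<Longrightarrow> i < N \<Longrightarrow> xs i \<ge> 0"
  unfolding lp_feasible_def by blast

lemma weak_dual:
  assumes F: "lp_feasible N E xs" and m: "\<And>i. i < N \<Longrightarrow> m i \<ge> 0"
  shows "phi m \<le> (1 + \<delta>/2) * (\<Sum>i<N. xs i)"
proof -
  define x' where "x' = (\<lambda>i. min 1 (xs i))"
  have box: "0 \<le> x' i \<and> x' i \<le> 1" if "i < N" for i
    unfolding x'_def using feas_nn[OF F that] by simp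
  have "phi m + \<delta>/2 * nsq (\<lambda>i. x' i - xhat m i) \<le> Lag x' m"
    unfolding phi_def by (rule Lag_min) (rule box)
  moreover have "0 \<le> \<delta>/2 * nsq (\<lambda>i. x' i - xhat m i)" using dpos nsq_nonneg by simp
  ultimately have 1: "phi m \<le> Lag x' m" by linarith
  have feas': "(\<Sum>j\<in>nbhd N E i. x' j) \<ge> 1" if i: "i < N" for i
  proof (cases "\<exists>j\<in>nbhd N E i. xs j \<ge> 1")
    case True
    then obtain j where j: "j \<in> nbhd N E i" "xs j \<ge> 1" by blast
    have "x' j \<le> (\<Sum>j\<in>nbhd N E i. x' j)"
      by (rule member_le_sum) (use j in \<open>auto simp: nbhd_def box\<close>)
    moreover have "x' j = 1" using j(2) unfolding x'_def by simp
    ultimately show ?thesis by simp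
  next
    case False
    hence "(\<Sum>j\<in>nbhd N E i. x' j) = (\<Sum>j\<in>nbhd N E i. xs j)"
      unfolding x'_def by (intro sum.cong refl) auto
    thus ?thesis using feas_nbhd[OF F i] by simp
  qed
  have 2: "(\<Sum>i<N. m i * (1 - (\<Sum>j\<in>nbhd N E i. x' j))) \<le> 0"
    by (intro sum_nonpos mult_nonneg_nonpos) (use m feas' in auto)
  have 3: "(\<Sum>i<N. x' i + \<delta>/2 * (x' i)^2) \<le> (\<Sum>i<N. (1 + \<delta>/2) * xs i)"
  proof (intro sum_mono)
    fix i assume "i \<in> {..<N}"
    hence i: "i < N" by simp
    have "(x' i)^2 \<le> x' i" using box[OF i] by (simp add: power2_eq_square mult_left_le)
    hence "\<delta>/2 * (x' i)^2 \<le> \<delta>/2 * x' i" using dpos by simp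
    moreover have "x' i \<le> xs i" unfolding x'_def by simp
    moreover have "\<delta>/2 * x' i \<le> \<delta>/2 * xs i" using dpos \<open>x' i \<le> xs i\<close> by simp
    ultimately show "x' i + \<delta>/2 * (x' i)^2 \<le> (1 + \<delta>/2) * xs i" by (simp add: algebra_simps)
  qed
  have "Lag x' m \<le> (\<Sum>i<N. (1 + \<delta>/2) * xs i)" unfolding Lag_def using 2 3 by linarith
  thus ?thesis using 1 by (simp add: sum_distrib_left)
qed

lemma opt_lb: assumes F: "lp_feasible N E xs" shows "real N \<le> D * (\<Sum>i<N. xs i)"
proof -
  have "real N = (\<Sum>i<N. (1::real))" by simp
  also have "\<dots> \<le> (\<Sum>i<N. \<Sum>j\<in>nbhd N E i. xs j)" by (intro sum_mono) (use feas_nbhd[OF F] in auto)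
  also have "\<dots> = (\<Sum>j<N. \<Sum>i\<in>nbhd N E j. xs j)" by (rule swap_nbhd)
  also have "\<dots> = (\<Sum>j<N. real (card (nbhd N E j)) * xs j)" by simp
  also have "\<dots> \<le> (\<Sum>j<N. D * xs j)"
    by (intro sum_mono mult_right_mono card_nbhd) (use feas_nn[OF F] in auto)
  also have "\<dots> = D * (\<Sum>i<N. xs i)" by (simp add: sum_distrib_left)
  finally show ?thesis .
qed

lemma XB_mul: "AA k * XB k j = (\<Sum>t\<le>k. a t * xhat (lam t) j)"
  unfolding XB_def using AA_pos[of k] by simp

lemma Zform: "Z k i = AA k * (1 - (\<Sum>j\<in>nbhd N E i. XB k j))"
proof -
  have "Z k i = (\<Sum>t\<le>k. a t - (\<Sum>j\<in>nbhd N E i. a t * xhat (lam t) j))"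
    unfolding Z_def grad_def by (intro sum.cong refl) (simp add: right_diff_distrib sum_distrib_left)
  also have "\<dots> = AA k - (\<Sum>t\<le>k. \<Sum>j\<in>nbhd N E i. a t * xhat (lam t) j)"
    by (simp add: sum_subtractf sum_a)
  also have "(\<Sum>t\<le>k. \<Sum>j\<in>nbhd N E i. a t * xhat (lam t) j) = (\<Sum>j\<in>nbhd N E i. \<Sum>t\<le>k. a t * xhat (lam t) j)"
    by (rule sum.swap)
  also have "\<dots> = (\<Sum>j\<in>nbhd N E i. AA k * XB k j)" by (simp add: XB_mul)
  finally show ?thesis by (simp add: sum_distrib_left right_diff_distrib)
qed

lemma ell_lower: "AA k * (\<Sum>i<N. XB k i) + ip (Z k) l \<le> ell k l"
proof -
  have pt: "(\<Sum>i<N. xhat (lam t) i) + ip (grad (lam t)) l \<le> phi (lam t) + ip (grad (lam t)) (\<lambda>i. l i - lam t i)" for t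
  proof -
    have "phi (lam t) = (\<Sum>i<N. xhat (lam t) i + \<delta>/2 * (xhat (lam t) i)^2) + ip (grad (lam t)) (lam t)"
      unfolding phi_def Lag_def ip_def grad_def by (simp add: mult.commute)
    moreover have "ip (grad (lam t)) (\<lambda>i. l i - lam t i) = ip (grad (lam t)) l - ip (grad (lam t)) (lam t)"
      unfolding ip_def by (simp add: right_diff_distrib sum_subtractf)
    moreover have "(\<Sum>i<N. xhat (lam t) i) \<le> (\<Sum>i<N. xhat (lam t) i + \<delta>/2 * (xhat (lam t) i)^2)"
      by (intro sum_mono) (use dpos in simp)
    ultimately show ?thesis by linarith
  qed
  have "(\<Sum>t\<le>k. a t * ((\<Sum>i<N. xhat (lam t) i) + ip (grad (lam t)) l)) \<le> ell k l"
    unfolding ell_def by (intro sum_mono mult_left_mono pt) (use a_pos in \<open>auto intro: less_imp_le\<close>)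
  moreover have "(\<Sum>t\<le>k. a t * ((\<Sum>i<N. xhat (lam t) i) + ip (grad (lam t)) l))
      = (\<Sum>t\<le>k. \<Sum>i<N. a t * xhat (lam t) i) + (\<Sum>t\<le>k. a t * ip (grad (lam t)) l)"
    by (simp add: sum.distrib ring_distribs sum_distrib_left)
  moreover have "(\<Sum>t\<le>k. \<Sum>i<N. a t * xhat (lam t) i) = AA k * (\<Sum>i<N. XB k i)"
    by (subst sum.swap) (simp add: XB_mul sum_distrib_left)
  moreover have "(\<Sum>t\<le>k. a t * ip (grad (lam t)) l) = ip (Z k) l"
    unfolding ip_wsum Z_def ..
  ultimately show ?thesis by linarith
qed

lemma main_bound:
  assumes F: "lp_feasible N E xs"
  shows "(\<Sum>i<N. alg_x N E \<delta> \<alpha> k i) \<le> (1 + \<delta>/2) * (\<Sum>i<N. xs i) + real N / (2 * \<alpha> * AA k)"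
proof -
  define vv where "vv = (\<lambda>i. 1 - (\<Sum>j\<in>nbhd N E i. XB k j))"
  define lt where "lt = (\<lambda>i. if vv i > 0 then 1 else (0::real))"
  have Ap: "AA k > 0" by (rule AA_pos)
  have inv: "ell k lt - nsq lt / (2*\<alpha>) \<le> AA k * phi (mu (lam k))"
    by (rule INV) (simp add: lt_def)
  have "phi (mu (lam k)) \<le> (1 + \<delta>/2) * (\<Sum>i<N. xs i)"
    by (rule weak_dual[OF F]) (simp add: mu_def pospart_nonneg)
  hence wd: "AA k * phi (mu (lam k)) \<le> AA k * ((1 + \<delta>/2) * (\<Sum>i<N. xs i))"
    using Ap by (intro mult_left_mono) auto
  have ipz: "ip (Z k) lt = AA k * (\<Sum>i<N. pospart (vv i))"
    unfolding ip_def sum_distrib_left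
    by (intro sum.cong refl) (simp add: Zform lt_def vv_def pospart_def)
  have ns: "nsq lt \<le> real N"
  proof -
    have "nsq lt \<le> (\<Sum>i<N. (1::real))" unfolding nsq_def by (intro sum_mono) (simp add: lt_def)
    thus ?thesis by simp
  qed
  hence ns2: "nsq lt / (2*\<alpha>) \<le> real N / (2*\<alpha>)" using apos by (simp add: divide_right_mono)
  have low: "AA k * (\<Sum>i<N. XB k i) + AA k * (\<Sum>i<N. pospart (vv i)) \<le> ell k lt"
    using ell_lower[of k lt] ipz by simp
  have sx: "(\<Sum>i<N. alg_x N E \<delta> \<alpha> k i) = (\<Sum>i<N. XB k i) + (\<Sum>i<N. pospart (vv i))"
    unfolding alg_x_eq vv_def by (simp add: sum.distrib)
  have "AA k * (\<Sum>i<N. alg_x N E \<delta> \<alpha> k i) \<le> AA k * ((1 + \<delta>/2) * (\<Sum>i<N. xs i)) + real N / (2*\<alpha>)"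
    unfolding sx using low inv wd ns2 by (simp add: ring_distribs)
  hence "(\<Sum>i<N. alg_x N E \<delta> \<alpha> k i) \<le> (AA k * ((1 + \<delta>/2) * (\<Sum>i<N. xs i)) + real N / (2*\<alpha>)) / AA k"
    using Ap by (simp add: le_divide_eq mult.commute)
  also have "\<dots> = (1 + \<delta>/2) * (\<Sum>i<N. xs i) + real N / (2 * \<alpha> * AA k)"
    using Ap by (simp add: add_divide_distrib)
  finally show ?thesis .
qed

end

lemma powr_sq: "(x::real) > 0 \<Longrightarrow> (x powr (3/2))^2 = x^3"
proof -
  assume x: "x > 0"
  have "(x powr (3/2))^2 = x powr (3/2) * x powr (3/2)" by (simp add: power2_eq_square)
  also have "\<dots> = x powr (real 3)" by (simp add: powr_add[symmetric])
  also have "\<dots> = x^3" using x by (rule powr_realpow)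
  finally show ?thesis .
qed

theorem corollary1:
  shows "\<exists>C>0. \<forall>(\<epsilon>::real) (N::nat) (E::nat set set) (xs::nat \<Rightarrow> real) (k::nat).
     0 < \<epsilon> \<and> \<epsilon> \<le> 1 \<and> N \<ge> 1 \<and> simple_graph N E \<and> lp_optimal N E xs \<and>
     real k \<ge> C * (real (dmax N E) + 1) powr (3/2) / \<epsilon> \<longrightarrow>
     ((\<Sum>i<N. alg_x N E \<epsilon> (\<epsilon> / (2 * (real (dmax N E) + 1)^2)) k i) - (\<Sum>i<N. xs i))
       / (\<Sum>i<N. xs i) \<le> \<epsilon>"
proof (intro exI[of _ 3] conjI allI impI)
  show "(0::real) < 3" by simp
  fix \<epsilon> :: real and N :: nat and E :: "nat set set" and xs :: "nat \<Rightarrow> real" and k :: nat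
  assume H: "0 < \<epsilon> \<and> \<epsilon> \<le> 1 \<and> N \<ge> 1 \<and> simple_graph N E \<and> lp_optimal N E xs \<and>
     real k \<ge> 3 * (real (dmax N E) + 1) powr (3/2) / \<epsilon>"
  define D where "D = real (dmax N E) + 1"
  define \<alpha> where "\<alpha> = \<epsilon> / (2 * D^2)"
  define OPT where "OPT = (\<Sum>i<N. xs i)"
  have ep: "\<epsilon> > 0" and N1: "N \<ge> 1" and F: "lp_feasible N E xs" and kb: "real k \<ge> 3 * D powr (3/2) / \<epsilon>"
    using H unfolding lp_optimal_def D_def by auto
  have Dpos: "D > 0" unfolding D_def by simp
  have ap: "\<alpha> > 0" unfolding \<alpha>_def using ep Dpos by simp
  have aD: "\<alpha> * D^2 \<le> \<epsilon>" unfolding \<alpha>_def using ep Dpos by simp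
  interpret alg N E \<epsilon> \<alpha>
    by unfold_locales (use ep ap aD in \<open>simp_all add: D_def\<close>)
  have mb: "(\<Sum>i<N. alg_x N E \<epsilon> \<alpha> k i) \<le> (1 + \<epsilon>/2) * OPT + real N / (2 * \<alpha> * AA k)"
    unfolding OPT_def by (rule main_bound[OF F])
  have lb: "real N \<le> D * OPT" unfolding OPT_def D_def by (rule opt_lb[OF F])
  have OPTpos: "OPT > 0"
  proof -
    have "0 < real N" using N1 by simp
    hence "0 < D * OPT" using lb by linarith
    thus ?thesis using Dpos by (simp add: zero_less_mult_iff)
  qed
  have Ap: "AA k > 0" by (rule AA_pos)
  have key: "2 * D^3 \<le> \<epsilon>^2 * AA k"
  proof -
    have "3 * D powr (3/2) \<le> real k * \<epsilon>" using kb ep by (simp add: divide_le_eq)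
    moreover have nn: "0 \<le> 3 * D powr (3/2)" using powr_ge_zero[of D "3/2"] by linarith
    ultimately have "(3 * D powr (3/2))^2 \<le> (real k * \<epsilon>)^2"
      by (rule power_mono)
    hence "9 * D^3 \<le> (real k)^2 * \<epsilon>^2" using powr_sq[OF Dpos] by (simp add: power_mult_distrib)
    moreover have "(real k)^2 \<le> 4 * AA k" unfolding AA_def by (simp add: power2_eq_square algebra_simps)
    hence "(real k)^2 * \<epsilon>^2 \<le> (4 * AA k) * \<epsilon>^2" by (intro mult_right_mono) auto
    hence "(real k)^2 * \<epsilon>^2 \<le> 4 * (\<epsilon>^2 * AA k)" by (simp add: mult_ac)
    moreover have "0 \<le> D^3" using Dpos by simp
    ultimately show ?thesis by linarith
  qed
  have t2: "real N / (2 * \<alpha> * AA k) \<le> \<epsilon>/2 * OPT"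
  proof -
    have "real N / (2 * \<alpha> * AA k) \<le> D * OPT / (2 * \<alpha> * AA k)"
      using lb ap Ap by (intro divide_right_mono) auto
    also have "\<dots> = D^3 * OPT / (\<epsilon> * AA k)"
      unfolding \<alpha>_def using Dpos ep by (simp add: field_simps power2_eq_square power3_eq_cube)
    also have "\<dots> \<le> \<epsilon>/2 * OPT"
    proof -
      have "D^3 * OPT * 2 \<le> \<epsilon>^2 * AA k * OPT" using key OPTpos
        by (metis mult.commute mult_right_mono less_imp_le mult.left_commute)
      thus ?thesis using ep Ap by (simp add: divide_le_eq power2_eq_square algebra_simps)
    qed
    finally show ?thesis .
  qed
  have "(\<Sum>i<N. alg_x N E \<epsilon> \<alpha> k i) - OPT \<le> \<epsilon> * OPT" using mb t2 by (simp add: algebra_simps)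
  hence "((\<Sum>i<N. alg_x N E \<epsilon> \<alpha> k i) - OPT) / OPT \<le> \<epsilon>" using OPTpos by (simp add: divide_le_eq)
  thus "((\<Sum>i<N. alg_x N E \<epsilon> (\<epsilon> / (2 * (real (dmax N E) + 1)^2)) k i) - (\<Sum>i<N. xs i))
       / (\<Sum>i<N. xs i) \<le> \<epsilon>" unfolding \<alpha>_def D_def OPT_def .
qed

end
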